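(* For each $n$, let $G_n$ be a $d$-regular graph on $n$ vertices with $d = d_n = \omega(\sqrt{n})$. Let $\widehat{G}_n$ be the cone over $G_n$, obtained by adding a new (conical) vertex adjacent to all vertices of $G_n$, and let $\widehat{G}_n(P_\infty)$ be the infinite graph obtained by attaching an infinite one-sided path to the conical vertex (i.e. identifying the conical vertex with the first vertex of the path $P_\infty$). Let $\mathcal{H}_0$ be the adjacency operator of $\widehat{G}_n(P_\infty)$ on $\ell^2$ of its vertex set. Let $z_1\in\ell^2$ be the natural embedding of the normalized principal eigenvector of $G_n$ (i.e. $z_1 = n^{-1/2}\sum_{v\in V(G_n)} e_v$, zero elsewhere). Suppose that there are a time $t_0$, a real $\gamma$, a unit complex number $\zeta$, and a vertex $w$ of $G_n$ such that \[ \left\| e^{-it_0(\mathcal{H}_0+\gamma P_w)} z_1 - \zeta e_w\right\|^2 = o(1), \] where $P_w$ is the orthogonal projection onto $\mathrm{span}\{e_w\}$. Let $\epsilon_1 = |\langle e_w, z_1\rangle|$. If $1/(\gamma\epsilon_1) = o(1)$, then $\gamma t_0 = \Omega(1/\epsilon_1)$.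
   Context: All asymptotic notation refers to $n\to\infty$: $g=o(f)$ means $g/f\to0$, $g=\omega(f)$ means $g/f\to\infty$, $g=\Omega(f)$ means $g/f$ is bounded below by a positive constant. The quantities $t_0,\gamma,\zeta,w$ may depend on $n$. The inner product is $\langle x,y\rangle=\sum_u \overline{x_u}y_u$. *)

theory Defs
  imports "HOL-Analysis.Analysis" "HOL-Library.Landau_Symbols"
begin

definition regular_graph :: "nat \<Rightarrow> nat \<Rightarrow> (nat \<Rightarrow> nat \<Rightarrow> bool) \<Rightarrow> bool" where
  "regular_graph n d E \<longleftrightarrow>
     (\<forall>u v. E u v \<longrightarrow> u < n \<and> v < n) \<and> (\<forall>u v. E u v \<longrightarrow> E v u) \<and>
     (\<forall>u. \<not> E u u) \<and> (\<forall>u<n. card {v. E u v} = d)"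

text \<open>Adjacency of the infinite graph  hat G_n(P_infinity):  vertices 0..<n are those of
  G_n, vertex n is the conical vertex (= first vertex of the path), and vertex n+k
  is the k-th vertex of the one-sided infinite path.\<close>
definition cone_path_adj :: "(nat \<Rightarrow> nat \<Rightarrow> bool) \<Rightarrow> nat \<Rightarrow> nat \<Rightarrow> nat \<Rightarrow> bool" where
  "cone_path_adj E n u v \<longleftrightarrow>
     (u < n \<and> v < n \<and> E u v) \<or> (u < n \<and> v = n) \<or> (u = n \<and> v < n) \<or>
     (n \<le> u \<and> n \<le> v \<and> (u = Suc v \<or> v = Suc u))"

definition basis :: "nat \<Rightarrow> nat \<Rightarrow> complex" where
  "basis w u = (if u = w then 1 else 0)"

definition l2_inner :: "(nat \<Rightarrow> complex) \<Rightarrow> (nat \<Rightarrow> complex) \<Rightarrow> complex" where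
  "l2_inner f g = infsum (\<lambda>u. cnj (f u) * g u) UNIV"

definition l2norm_sq :: "(nat \<Rightarrow> complex) \<Rightarrow> real" where
  "l2norm_sq f = infsum (\<lambda>u. (norm (f u))^2) UNIV"

definition adj_op :: "(nat \<Rightarrow> nat \<Rightarrow> bool) \<Rightarrow> (nat \<Rightarrow> complex) \<Rightarrow> nat \<Rightarrow> complex" where
  "adj_op A f u = (\<Sum>v\<in>{v. A u v}. f v)"

definition proj :: "nat \<Rightarrow> (nat \<Rightarrow> complex) \<Rightarrow> nat \<Rightarrow> complex" where
  "proj w f u = l2_inner (basis w) f * basis w u"

definition ham :: "(nat \<Rightarrow> nat \<Rightarrow> bool) \<Rightarrow> nat \<Rightarrow> real \<Rightarrow> nat \<Rightarrow> (nat \<Rightarrow> complex) \<Rightarrow> nat \<Rightarrow> complex" where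
  "ham E n \<gamma> w f u = adj_op (cone_path_adj E n) f u + complex_of_real \<gamma> * proj w f u"

text \<open>exp(-i t H) f, given coordinatewise by the (norm-convergent, hence coordinatewise
  convergent) exponential series  sum_k (-i t)^k / k! H^k f.\<close>
definition evol :: "((nat \<Rightarrow> complex) \<Rightarrow> nat \<Rightarrow> complex) \<Rightarrow> real \<Rightarrow> (nat \<Rightarrow> complex) \<Rightarrow> nat \<Rightarrow> complex" where
  "evol H t f u = (\<Sum>k. ((- \<i> * complex_of_real t) ^ k / fact k) * (H ^^ k) f u)"

definition z1 :: "nat \<Rightarrow> nat \<Rightarrow> complex" where
  "z1 n u = (if u < n then complex_of_real (1 / sqrt (real n)) else 0)"

definition eps1 :: "nat \<Rightarrow> nat \<Rightarrow> real" where
  "eps1 n w = norm (l2_inner (basis w) (z1 n))"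

end

theory Submission
  imports Defs
begin


definition coef :: "real \<Rightarrow> nat \<Rightarrow> complex" where
  "coef t k = (- \<i> * complex_of_real t) ^ k / fact k"

lemma norm_coef: "norm (coef t k) = \<bar>t\<bar> ^ k / fact k"
  by (simp add: coef_def norm_divide norm_power norm_mult)

lemma evol_coef: "evol H t x u = (\<Sum>k. coef t k * (H ^^ k) x u)"
  by (simp add: evol_def coef_def)

locale opctx =
  fixes H :: "(nat \<Rightarrow> complex) \<Rightarrow> nat \<Rightarrow> complex" and M0 :: nat and B :: real
  assumes lin: "\<And>a f g. H (\<lambda>u. a * f u + g u) = (\<lambda>u. a * H f u + H g u)"
    and bnd: "\<And>f X u. (\<And>v. norm (f v) \<le> X) \<Longrightarrow> norm (H f u) \<le> B * X"
    and B_nonneg: "B \<ge> 0"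
    and supp: "\<And>f M u. M0 \<le> M \<Longrightarrow> (\<And>u. M \<le> u \<Longrightarrow> f u = 0) \<Longrightarrow> Suc M \<le> u \<Longrightarrow> H f u = 0"
    and sa: "\<And>f g L. (\<And>u. L \<le> u \<Longrightarrow> f u = 0) \<Longrightarrow> (\<And>u. L \<le> u \<Longrightarrow> g u = 0) \<Longrightarrow>
        (\<Sum>u<L. cnj (H f u) * g u) = (\<Sum>u<L. cnj (f u) * H g u)"
begin

lemma pow_bnd: "(\<And>v. norm (x v) \<le> X) \<Longrightarrow> norm ((H ^^ k) x u) \<le> B ^ k * X"
proof (induction k arbitrary: u)
  case 0 then show ?case by simp
next
  case (Suc k)
  have "norm (H ((H ^^ k) x) u) \<le> B * (B^k * X)" by (rule bnd) (use Suc in auto)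
  then show ?case by (simp add: mult.assoc)
qed

lemma pow_supp: "M0 \<le> M \<Longrightarrow> (\<And>u. M \<le> u \<Longrightarrow> x u = 0) \<Longrightarrow> M + k \<le> u \<Longrightarrow> (H ^^ k) x u = 0"
proof (induction k arbitrary: u)
  case 0 then show ?case by simp
next
  case (Suc k)
  have "H ((H ^^ k) x) u = 0"
    by (rule supp[of "M + k"]) (use Suc in auto)
  then show ?case by simp
qed

lemma pow_lin: "(H ^^ k) (\<lambda>u. a * f u + g u) = (\<lambda>u. a * (H ^^ k) f u + (H ^^ k) g u)"
  by (induction k) (simp_all add: lin)

lemma summable_ser:
  assumes "\<And>v. norm (x v) \<le> X"
  shows "summable (\<lambda>k. coef t k * (H ^^ k) x u)"
proof (rule summable_comparison_test')
  show "summable (\<lambda>k. X * (inverse (fact k) * (\<bar>t\<bar> * B) ^ k))"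
    by (intro summable_mult summable_exp)
  fix k
  have "norm (coef t k * (H ^^ k) x u) \<le> (\<bar>t\<bar> ^ k / fact k) * (B ^ k * X)"
    unfolding norm_mult norm_coef by (intro mult_left_mono pow_bnd assms) auto
  also have "\<dots> = X * (inverse (fact k) * (\<bar>t\<bar> * B) ^ k)"
    by (simp add: power_mult_distrib field_simps)
  finally show "norm (coef t k * (H ^^ k) x u) \<le> X * (inverse (fact k) * (\<bar>t\<bar> * B) ^ k)" .
qed

lemma evol_lin:
  assumes "\<And>v. norm (f v) \<le> X" "\<And>v. norm (g v) \<le> Y"
  shows "evol H t (\<lambda>u. a * f u + g u) u = a * evol H t f u + evol H t g u"
proof -
  have s1: "summable (\<lambda>k. coef t k * (H ^^ k) f u)" by (rule summable_ser[OF assms(1)])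
  have s2: "summable (\<lambda>k. coef t k * (H ^^ k) g u)" by (rule summable_ser[OF assms(2)])
  have "evol H t (\<lambda>u. a * f u + g u) u = (\<Sum>k. a * (coef t k * (H ^^ k) f u) + coef t k * (H ^^ k) g u)"
    unfolding evol_coef pow_lin by (simp add: algebra_simps)
  also have "\<dots> = (\<Sum>k. a * (coef t k * (H ^^ k) f u)) + (\<Sum>k. coef t k * (H ^^ k) g u)"
    by (intro suminf_add[symmetric] summable_mult s1 s2)
  also have "\<dots> = a * evol H t f u + evol H t g u"
    unfolding evol_coef by (simp add: suminf_mult s1)
  finally show ?thesis .
qed

lemma evol_zero: "evol H 0 x u = x u"
proof -
  have "evol H 0 x u = (\<Sum>k. ((H ^^ k) x u / fact k) * 0 ^ k)"
    unfolding evol_def by (intro suminf_cong) (simp add: power_mult_distrib)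
  also have "\<dots> = (H ^^ 0) x u / fact 0" by (rule powser_zero)
  finally show ?thesis by simp
qed

end


lemma tail_half:
  fixes e :: "nat \<Rightarrow> real"
  assumes "summable e"
  shows "(\<lambda>N. \<Sum>j\<in>{N div 2..<N}. e j) \<longlonglongrightarrow> 0"
proof -
  have l1: "(\<lambda>N. \<Sum>j<N. e j) \<longlonglongrightarrow> suminf e" by (rule summable_LIMSEQ[OF assms])
  have fl: "filterlim (\<lambda>N::nat. N div 2) at_top at_top"
    unfolding filterlim_at_top eventually_at_top_linorder
  proof
    fix Z :: nat show "\<exists>N0. \<forall>N\<ge>N0. Z \<le> N div 2" by (rule exI[of _ "2*Z"]) auto
  qed
  have l2: "(\<lambda>N. \<Sum>j<N div 2. e j) \<longlonglongrightarrow> suminf e"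
    using filterlim_compose[OF l1 fl] by simp
  have eq: "(\<Sum>j\<in>{N div 2..<N}. e j) = (\<Sum>j<N. e j) - (\<Sum>j<N div 2. e j)" for N
    using sum_diff_nat_ivl[of 0 "N div 2" N e] by (simp add: atLeast0LessThan)
  show ?thesis unfolding eq using tendsto_diff[OF l1 l2] by simp
qed

lemma pow_mi: "(- (\<i> * (z::complex))) ^ k = (- \<i>) ^ k * z ^ k"
  by (metis mult_minus_left power_mult_distrib)

context opctx begin

lemma evol_deriv:
  assumes xb: "\<And>v. norm (x v) \<le> X"
  shows "((\<lambda>s. evol H s x u) has_vector_derivative (- \<i> * evol H t (H x) u)) (at t)"
proof -
  define a where "a k = (- \<i>) ^ k / fact k * (H ^^ k) x u" for k
  have sm: "summable (\<lambda>k. a k * z ^ k)" for z :: complex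
  proof (rule summable_comparison_test')
    show "summable (\<lambda>k. X * (inverse (fact k) * (norm z * B) ^ k))" by (intro summable_mult summable_exp)
    fix k
    have "norm (a k * z ^ k) = (norm z ^ k / fact k) * norm ((H ^^ k) x u)"
      by (simp add: a_def norm_mult norm_divide norm_power)
    also have "\<dots> \<le> (norm z ^ k / fact k) * (B ^ k * X)" by (intro mult_left_mono pow_bnd xb) auto
    also have "\<dots> = X * (inverse (fact k) * (norm z * B) ^ k)" by (simp add: power_mult_distrib field_simps)
    finally show "norm (a k * z ^ k) \<le> X * (inverse (fact k) * (norm z * B) ^ k)" .
  qed
  have D: "((\<lambda>z. \<Sum>k. a k * z ^ k) has_field_derivative (\<Sum>k. diffs a k * (complex_of_real t) ^ k)) (at (complex_of_real t))"
    by (rule termdiffs_strong'[where K = "norm (complex_of_real t) + 1"]) (use sm in auto)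
  have e1: "evol H s x u = (\<Sum>k. a k * (complex_of_real s) ^ k)" for s
    unfolding evol_def a_def
  proof (intro suminf_cong)
    fix k
    have "(- \<i> * complex_of_real s) ^ k = (- \<i>) ^ k * complex_of_real s ^ k" by (rule power_mult_distrib)
    then show "(- \<i> * complex_of_real s) ^ k / fact k * (H ^^ k) x u = (- \<i>) ^ k / fact k * (H ^^ k) x u * complex_of_real s ^ k"
      by simp
  qed
  have Hxb: "\<And>v. norm (H x v) \<le> B * X" by (rule bnd[OF xb])
  have e2: "(\<Sum>k. diffs a k * (complex_of_real t) ^ k) = - \<i> * evol H t (H x) u"
  proof -
    have c: "of_nat (Suc k) * ((- \<i>) ^ Suc k / fact (Suc k)) = - \<i> * ((- \<i>) ^ k / (fact k :: complex))" for k
    proof -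
      have "(fact (Suc k) :: complex) = of_nat (Suc k) * fact k" by (simp add: fact_Suc)
      then show ?thesis by (simp add: field_simps del: of_nat_Suc)
    qed
    have "diffs a k * (complex_of_real t) ^ k = - \<i> * (coef t k * (H ^^ k) (H x) u)" for k
    proof -
      have "diffs a k * (complex_of_real t) ^ k = (of_nat (Suc k) * ((- \<i>) ^ Suc k / fact (Suc k))) * (H ^^ k) (H x) u * (complex_of_real t) ^ k"
        by (simp add: diffs_def a_def funpow_Suc_right del: funpow.simps of_nat_Suc)
      also have "\<dots> = - \<i> * (coef t k * (H ^^ k) (H x) u)"
        unfolding c by (simp add: coef_def pow_mi)
      finally show ?thesis .
    qed
    then have "(\<Sum>k. diffs a k * (complex_of_real t) ^ k) = (\<Sum>k. (- \<i>) * (coef t k * (H ^^ k) (H x) u))"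
      by presburger
    also have "\<dots> = - \<i> * (\<Sum>k. coef t k * (H ^^ k) (H x) u)"
      by (rule suminf_mult[OF summable_ser[OF Hxb]])
    finally show ?thesis unfolding evol_coef .
  qed
  show ?thesis using has_vector_derivative_real_field[OF D] unfolding e2 e1[symmetric] by simp
qed

end


lemma cnj_coef: "cnj (coef t j) = (\<i> * complex_of_real t) ^ j /\<^sub>R fact j"
  by (simp add: coef_def scaleR_conv_of_real field_simps)

lemma coef_scaleR: "coef t j = (- \<i> * complex_of_real t) ^ j /\<^sub>R fact j"
  by (simp add: coef_def scaleR_conv_of_real field_simps)

lemma coef_conv: "(\<Sum>j\<le>p. cnj (coef t j) * coef t (p - j)) = (if p = 0 then 1 else 0)"
proof -
  have "(\<i> * complex_of_real t + - \<i> * complex_of_real t) ^ p /\<^sub>R fact p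
      = (\<Sum>i\<le>p. (\<i> * complex_of_real t) ^ i /\<^sub>R fact i * ((- \<i> * complex_of_real t) ^ (p - i) /\<^sub>R fact (p - i)))"
    by (rule exp_series_add_commuting) (simp add: algebra_simps)
  moreover have "(\<Sum>j\<le>p. cnj (coef t j) * coef t (p - j)) = (\<Sum>i\<le>p. (\<i> * complex_of_real t) ^ i /\<^sub>R fact i * ((- \<i> * complex_of_real t) ^ (p - i) /\<^sub>R fact (p - i)))"
    by (simp only: cnj_coef, simp only: coef_scaleR)
  moreover have "\<i> * complex_of_real t + - \<i> * complex_of_real t = 0" by simp
  ultimately have "(\<Sum>j\<le>p. cnj (coef t j) * coef t (p - j)) = (0::complex) ^ p /\<^sub>R fact p"
    by metis
  then show ?thesis by (cases p) simp_all
qed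

context opctx begin

lemma contraction:
  assumes M: "M0 \<le> M" and xs: "\<And>u. M \<le> u \<Longrightarrow> x u = 0" and F: "finite F"
  shows "(\<Sum>u\<in>F. (norm (evol H t x u))^2) \<le> (\<Sum>u<M. (norm (x u))^2)"
proof -
  define X where "X = (\<Sum>u<M. norm (x u))"
  have xb: "norm (x v) \<le> X" for v
  proof (cases "v < M")
    case True then show ?thesis unfolding X_def by (intro member_le_sum) auto
  next
    case False then show ?thesis using xs[of v] by (simp add: X_def sum_nonneg)
  qed
  have X0: "X \<ge> 0" unfolding X_def by (simp add: sum_nonneg)
  define h where "h k u = (H ^^ k) x u" for k u
  define S where "S N u = (\<Sum>k<N. coef t k * h k u)" for N u
  define m where "m p = (\<Sum>u<M. cnj (x u) * h p u)" for p
  define K where "K = real M * X * X"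
  define y where "y = \<bar>t\<bar> * B"
  define e where "e j = y ^ j / fact j" for j
  have y0: "y \<ge> 0" using B_nonneg by (simp add: y_def)
  have e_nn: "e j \<ge> 0" for j using y0 by (simp add: e_def)
  have e_sum: "summable e"
  proof -
    have "e = (\<lambda>n. inverse (fact n) * y ^ n)" by (simp add: e_def fun_eq_iff divide_inverse mult.commute)
    then show ?thesis using summable_exp[of y] by simp
  qed
  define Ey where "Ey = suminf e"
  have K0: "K \<ge> 0" using X0 by (simp add: K_def)
  have hs: "h k u = 0" if "M + k \<le> u" for k u
    using pow_supp[OF M xs that] by (simp add: h_def)
  have Ss: "S N u = 0" if "M + N \<le> u" for N u
    unfolding S_def using hs that by (intro sum.neutral) auto
  have mb: "norm (m p) \<le> K * B ^ p" for p
  proof -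
    have "norm (m p) \<le> (\<Sum>u<M. norm (x u) * norm (h p u))"
      unfolding m_def by (rule order.trans[OF norm_sum]) (simp add: norm_mult)
    also have "\<dots> \<le> (\<Sum>u<M. X * (B ^ p * X))"
      by (intro sum_mono mult_mono xb) (auto simp: h_def intro!: pow_bnd xb X0)
    also have "\<dots> = K * B ^ p" by (simp add: K_def)
    finally show ?thesis .
  qed
  have ip: "(\<Sum>u<L. cnj (h j u) * h k u) = (\<Sum>u<L. cnj (x u) * h (j + k) u)"
    if "M + j + k \<le> L" for j k L
    using that
  proof (induction j arbitrary: k)
    case 0 then show ?case by (simp add: h_def)
  next
    case (Suc j)
    have hfun: "h i = (H ^^ i) x" for i by (simp add: h_def fun_eq_iff)
    have hS: "h (Suc i) = H (h i)" for i by (simp add: hfun)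
    have "(\<Sum>u<L. cnj (h (Suc j) u) * h k u) = (\<Sum>u<L. cnj (h j u) * H (h k) u)"
      unfolding hS using Suc.prems by (intro sa) (auto intro!: hs)
    also have "\<dots> = (\<Sum>u<L. cnj (h j u) * h (Suc k) u)" by (simp add: hS)
    also have "\<dots> = (\<Sum>u<L. cnj (x u) * h (j + Suc k) u)" by (rule Suc.IH) (use Suc.prems in auto)
    finally show ?case by simp
  qed
  have ipM: "(\<Sum>u<L. cnj (x u) * g u) = (\<Sum>u<M. cnj (x u) * g u)" if "M \<le> L" for L g
    by (rule sum.mono_neutral_right) (use that xs in auto)
  define P where "P N = (\<Sum>u<M + 2*N. (norm (S N u))^2)" for N
  define g where "g j k = cnj (coef t j) * coef t k * m (j + k)" for j k
  have Pexp: "complex_of_real (P N) = (\<Sum>j<N. \<Sum>k<N. g j k)" for N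
  proof -
    have "complex_of_real (P N) = (\<Sum>u<M+2*N. cnj (S N u) * S N u)"
      unfolding P_def of_real_sum by (intro sum.cong refl) (simp only: complex_norm_square mult.commute)
    also have "\<dots> = (\<Sum>u<M+2*N. \<Sum>j<N. \<Sum>k<N. cnj (coef t j) * coef t k * (cnj (h j u) * h k u))"
      unfolding S_def cnj_sum sum_product by (intro sum.cong refl) (simp add: mult_ac)
    also have "\<dots> = (\<Sum>j<N. \<Sum>u<M+2*N. \<Sum>k<N. cnj (coef t j) * coef t k * (cnj (h j u) * h k u))"
      by (rule sum.swap)
    also have "\<dots> = (\<Sum>j<N. \<Sum>k<N. \<Sum>u<M+2*N. cnj (coef t j) * coef t k * (cnj (h j u) * h k u))"
      by (intro sum.cong refl sum.swap)
    also have "\<dots> = (\<Sum>j<N. \<Sum>k<N. cnj (coef t j) * coef t k * (\<Sum>u<M+2*N. cnj (h j u) * h k u))"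
      by (simp add: sum_distrib_left)
    also have "\<dots> = (\<Sum>j<N. \<Sum>k<N. g j k)"
    proof (intro sum.cong refl)
      fix j k assume "j \<in> {..<N}" "k \<in> {..<N}"
      then have "(\<Sum>u<M+2*N. cnj (h j u) * h k u) = m (j + k)"
        unfolding m_def by (subst ip) (auto intro!: ipM)
      then show "cnj (coef t j) * coef t k * (\<Sum>u<M+2*N. cnj (h j u) * h k u) = g j k"
        by (simp add: g_def)
    qed
    finally show ?thesis .
  qed
  have tri: "(\<Sum>(j,k)\<in>{(j,k). j + k < N}. g j k) = m 0" if "N > 0" for N
  proof -
    have "(\<Sum>(j,k)\<in>{(j,k). j + k < N}. g j k) = (\<Sum>p<N. \<Sum>j\<le>p. g j (p - j))"
      by (rule sum.triangle_reindex)
    also have "\<dots> = (\<Sum>p<N. m p * (\<Sum>j\<le>p. cnj (coef t j) * coef t (p - j)))"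
      by (intro sum.cong refl) (auto simp: g_def sum_distrib_left algebra_simps intro!: sum.cong)
    also have "\<dots> = (\<Sum>p<N. if p = 0 then m 0 else 0)"
      unfolding coef_conv by (intro sum.cong refl) auto
    also have "\<dots> = m 0" using that by simp
    finally show ?thesis .
  qed
  have rest: "norm (\<Sum>(j,k)\<in>({..<N}\<times>{..<N}) - {(j,k). j + k < N}. g j k)
      \<le> 2 * K * Ey * (\<Sum>j\<in>{N div 2..<N}. e j)" for N
  proof -
    let ?Q = "{..<N}\<times>{..<N}" and ?T = "{(j,k). j + k < N}"
    let ?A = "{N div 2..<N}\<times>{..<N}" and ?B = "{..<N}\<times>{N div 2..<N}"
    let ?f = "\<lambda>(j,k). K * (e j * e k)"
    have f_nn: "?f p \<ge> 0" for p using K0 e_nn by (cases p) (auto intro!: mult_nonneg_nonneg)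
    have gb: "norm (g j k) \<le> K * (e j * e k)" for j k
    proof -
      have "norm (g j k) = (\<bar>t\<bar> ^ j / fact j) * (\<bar>t\<bar> ^ k / fact k) * norm (m (j + k))"
        by (simp add: g_def norm_mult norm_coef)
      also have "\<dots> \<le> (\<bar>t\<bar> ^ j / fact j) * (\<bar>t\<bar> ^ k / fact k) * (K * B ^ (j + k))"
        by (intro mult_left_mono mb) auto
      also have "\<dots> = K * (e j * e k)"
        by (simp add: e_def y_def power_mult_distrib power_add field_simps)
      finally show ?thesis .
    qed
    have sub: "?Q - ?T \<subseteq> ?A \<union> ?B" by auto
    have "norm (\<Sum>(j,k)\<in>?Q-?T. g j k) \<le> (\<Sum>p\<in>?Q-?T. ?f p)"
      by (rule sum_norm_le) (auto simp: gb)
    also have "\<dots> \<le> (\<Sum>p\<in>?A \<union> ?B. ?f p)"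
      by (rule sum_mono2) (use sub f_nn in auto)
    also have "\<dots> \<le> (\<Sum>p\<in>?A. ?f p) + (\<Sum>p\<in>?B. ?f p)"
    proof -
      have "(\<Sum>p\<in>?A \<union> ?B. ?f p) = (\<Sum>p\<in>?A. ?f p) + (\<Sum>p\<in>?B. ?f p) - (\<Sum>p\<in>?A \<inter> ?B. ?f p)"
        by (rule sum_Un) auto
      moreover have "(\<Sum>p\<in>?A \<inter> ?B. ?f p) \<ge> 0" by (rule sum_nonneg) (use f_nn in auto)
      ultimately show ?thesis by linarith
    qed
    also have "(\<Sum>p\<in>?A. ?f p) = K * (\<Sum>j\<in>{N div 2..<N}. e j) * (\<Sum>k<N. e k)"
    proof -
      have "(\<Sum>p\<in>?A. ?f p) = (\<Sum>j\<in>{N div 2..<N}. \<Sum>k<N. K * (e j * e k))"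
        by (simp add: sum.cartesian_product)
      also have "\<dots> = K * ((\<Sum>j\<in>{N div 2..<N}. e j) * (\<Sum>k<N. e k))"
        by (subst sum_product) (simp only: sum_distrib_left)
      finally show ?thesis by (simp add: mult.assoc)
    qed
    also have "(\<Sum>p\<in>?B. ?f p) = K * (\<Sum>j<N. e j) * (\<Sum>k\<in>{N div 2..<N}. e k)"
    proof -
      have "(\<Sum>p\<in>?B. ?f p) = (\<Sum>j<N. \<Sum>k\<in>{N div 2..<N}. K * (e j * e k))"
        by (simp add: sum.cartesian_product)
      also have "\<dots> = K * ((\<Sum>j<N. e j) * (\<Sum>k\<in>{N div 2..<N}. e k))"
        by (subst sum_product) (simp only: sum_distrib_left)
      finally show ?thesis by (simp add: mult.assoc)
    qed
    also have "K * (\<Sum>j\<in>{N div 2..<N}. e j) * (\<Sum>k<N. e k) + K * (\<Sum>j<N. e j) * (\<Sum>k\<in>{N div 2..<N}. e k)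
        \<le> 2 * K * Ey * (\<Sum>j\<in>{N div 2..<N}. e j)"
    proof -
      have "(\<Sum>k<N. e k) \<le> Ey" unfolding Ey_def by (rule sum_le_suminf[OF e_sum]) (auto simp: e_nn)
      moreover have "(\<Sum>j\<in>{N div 2..<N}. e j) \<ge> 0" by (rule sum_nonneg) (simp add: e_nn)
      ultimately have "K * (\<Sum>j\<in>{N div 2..<N}. e j) * (\<Sum>k<N. e k) \<le> K * (\<Sum>j\<in>{N div 2..<N}. e j) * Ey"
        using K0 by (intro mult_left_mono) (auto intro!: mult_nonneg_nonneg)
      then show ?thesis by (simp add: algebra_simps)
    qed
    finally show ?thesis .
  qed
  define \<tau> where "\<tau> N = (\<Sum>j\<in>{N div 2..<N}. e j)" for N
  define m0 where "m0 = (\<Sum>u<M. (norm (x u))^2)"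
  have m0eq: "m 0 = complex_of_real m0"
    unfolding m_def m0_def h_def of_real_sum by (intro sum.cong refl) (simp only: funpow_0 complex_norm_square mult.commute)
  have Pb: "P N \<le> m0 + 2 * K * Ey * \<tau> N" if "N > 0" for N
  proof -
    let ?Q = "{..<N}\<times>{..<N}" and ?T = "{(j,k). j + k < N}"
    have TQ: "?T \<subseteq> ?Q" by auto
    have "complex_of_real (P N) = (\<Sum>(j,k)\<in>?Q. g j k)"
      unfolding Pexp by (simp add: sum.cartesian_product)
    also have "\<dots> = (\<Sum>(j,k)\<in>?Q - ?T. g j k) + (\<Sum>(j,k)\<in>?T. g j k)"
      by (rule sum.subset_diff[OF TQ]) auto
    also have "\<dots> = (\<Sum>(j,k)\<in>?Q - ?T. g j k) + complex_of_real m0"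
      using tri[OF that] m0eq by simp
    finally have "complex_of_real (P N) = (\<Sum>(j,k)\<in>?Q - ?T. g j k) + complex_of_real m0" .
    then have "P N = Re (\<Sum>(j,k)\<in>?Q - ?T. g j k) + m0"
      by (metis Re_complex_of_real plus_complex.sel(1))
    also have "\<dots> \<le> norm (\<Sum>(j,k)\<in>?Q - ?T. g j k) + m0"
      using complex_Re_le_cmod by (intro add_right_mono) blast
    also have "\<dots> \<le> 2 * K * Ey * \<tau> N + m0"
      using rest[of N] unfolding \<tau>_def by linarith
    finally show ?thesis by simp
  qed
  have FleP: "(\<Sum>u\<in>F. (norm (S N u))^2) \<le> P N" for N
  proof -
    have "(\<Sum>u\<in>F. (norm (S N u))^2) \<le> (\<Sum>u\<in>F \<union> {..<M+2*N}. (norm (S N u))^2)"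
      by (rule sum_mono2) (use F in auto)
    also have "\<dots> = P N"
      unfolding P_def by (rule sum.mono_neutral_right) (use F Ss in auto)
    finally show ?thesis .
  qed
  have lim1: "(\<lambda>N. \<Sum>u\<in>F. (norm (S N u))^2) \<longlonglongrightarrow> (\<Sum>u\<in>F. (norm (evol H t x u))^2)"
  proof (intro tendsto_sum tendsto_power tendsto_norm)
    fix u
    show "(\<lambda>N. S N u) \<longlonglongrightarrow> evol H t x u"
      unfolding S_def h_def evol_coef by (rule summable_LIMSEQ[OF summable_ser[OF xb]])
  qed
  have lim2: "(\<lambda>N. m0 + 2 * K * Ey * \<tau> N) \<longlonglongrightarrow> m0"
    using tendsto_add[OF tendsto_const tendsto_mult_right_zero[OF tail_half[OF e_sum]], of m0 "2 * K * Ey"]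
    unfolding \<tau>_def by simp
  have "(\<Sum>u\<in>F. (norm (evol H t x u))^2) \<le> m0"
  proof (rule LIMSEQ_le[OF lim1 lim2])
    show "\<exists>N0. \<forall>N\<ge>N0. (\<Sum>u\<in>F. (norm (S N u))^2) \<le> m0 + 2 * K * Ey * \<tau> N"
    proof (intro exI[of _ 1] allI impI)
      fix N :: nat assume "1 \<le> N"
      then show "(\<Sum>u\<in>F. (norm (S N u))^2) \<le> m0 + 2 * K * Ey * \<tau> N"
        using FleP[of N] Pb[of N] by simp
    qed
  qed
  then show ?thesis by (simp add: m0_def)
qed

end


lemma l2_inner_basis: "l2_inner (basis w) f = f w"
proof -
  have "infsum (\<lambda>u. cnj (basis w u) * f u) UNIV = infsum (\<lambda>u. cnj (basis w u) * f u) {w}"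
    by (rule infsum_cong_neutral) (auto simp: basis_def)
  then show ?thesis by (simp add: l2_inner_def basis_def)
qed

lemma proj_eq: "proj w f u = (if u = w then f w else 0)"
  by (simp add: proj_def l2_inner_basis basis_def)

lemma ham_eq: "ham E n \<gamma> w f u = (\<Sum>v\<in>{v. cone_path_adj E n u v}. f v) + complex_of_real \<gamma> * (if u = w then f w else 0)"
  by (simp add: ham_def adj_op_def proj_eq)

locale gctx =
  fixes E :: "nat \<Rightarrow> nat \<Rightarrow> bool" and n :: nat and \<gamma> :: real and w :: nat
  assumes Esupp: "\<And>u v. E u v \<Longrightarrow> u < n \<and> v < n"
    and Esym: "\<And>u v. E u v \<Longrightarrow> E v u"
    and wn: "w < n"
begin

abbreviation "A \<equiv> cone_path_adj E n"

lemma A_sym: "A u v = A v u"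
  unfolding cone_path_adj_def using Esym by blast

lemma nbr_sub: "{v. A u v} \<subseteq> (if u \<le> n then {..Suc n} else {u - 1, Suc u})"
  by (auto simp: cone_path_adj_def dest: Esupp)

lemma nbr_fin: "finite {v. A u v}"
  by (rule finite_subset[OF nbr_sub]) auto

lemma nbr_card: "card {v. A u v} \<le> n + 2"
proof -
  have "card {v. A u v} \<le> card (if u \<le> n then {..Suc n} else {u - 1, Suc u})"
    by (rule card_mono[OF _ nbr_sub]) auto
  also have "\<dots> \<le> n + 2"
  proof (cases "u \<le> n")
    case True then show ?thesis by simp
  next
    case False
    have "card {u - 1, Suc u} \<le> 2" by (rule order.trans[OF card_insert_le_m1]) auto
    then show ?thesis using False by simp
  qed
  finally show ?thesis .
qed

lemma ham_left: "(\<Sum>u<L. cnj (ham E n \<gamma> w f u) * g u) =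
   (\<Sum>u<L. \<Sum>v<L. if A u v then cnj (f v) * g u else 0) + complex_of_real \<gamma> * (if w < L then cnj (f w) * g w else 0)"
  if "\<And>u. L \<le> u \<Longrightarrow> f u = 0" for f g L
proof -
  have i: "(\<Sum>v\<in>{v. A u v}. cnj (f v) * g u) = (\<Sum>v<L. if A u v then cnj (f v) * g u else 0)" for u
  proof -
    have "(\<Sum>v\<in>{v. A u v}. cnj (f v) * g u) = (\<Sum>v\<in>{v. A u v} \<inter> {..<L}. cnj (f v) * g u)"
      by (rule sum.mono_neutral_right) (use nbr_fin in auto, metis that not_le)
    also have "\<dots> = (\<Sum>v\<in>{..<L} \<inter> {v. A u v}. cnj (f v) * g u)" by (simp add: Int_commute)
    also have "\<dots> = (\<Sum>v<L. if A u v then cnj (f v) * g u else 0)"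
      by (subst sum.inter_restrict) auto
    finally show ?thesis .
  qed
  have "(\<Sum>u<L. cnj (ham E n \<gamma> w f u) * g u) =
      (\<Sum>u<L. (\<Sum>v\<in>{v. A u v}. cnj (f v) * g u) + complex_of_real \<gamma> * (if u = w then cnj (f w) * g w else 0))"
    by (intro sum.cong refl) (simp add: ham_eq cnj_sum sum_distrib_right sum_distrib_left algebra_simps)
  also have "\<dots> = (\<Sum>u<L. \<Sum>v<L. if A u v then cnj (f v) * g u else 0) + complex_of_real \<gamma> * (if w < L then cnj (f w) * g w else 0)"
  proof -
    have g: "(\<Sum>u<L. complex_of_real \<gamma> * (if u = w then cnj (f w) * g w else 0)) = complex_of_real \<gamma> * (if w < L then cnj (f w) * g w else 0)"
      by (simp add: sum_distrib_left[symmetric])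
    show ?thesis by (simp only: sum.distrib i g)
  qed
  finally show ?thesis .
qed

lemma ham_right: "(\<Sum>u<L. cnj (f u) * ham E n \<gamma> w g u) =
   (\<Sum>u<L. \<Sum>v<L. if A u v then cnj (f u) * g v else 0) + complex_of_real \<gamma> * (if w < L then cnj (f w) * g w else 0)"
  if "\<And>u. L \<le> u \<Longrightarrow> g u = 0" for f g L
proof -
  have i: "(\<Sum>v\<in>{v. A u v}. cnj (f u) * g v) = (\<Sum>v<L. if A u v then cnj (f u) * g v else 0)" for u
  proof -
    have "(\<Sum>v\<in>{v. A u v}. cnj (f u) * g v) = (\<Sum>v\<in>{v. A u v} \<inter> {..<L}. cnj (f u) * g v)"
      by (rule sum.mono_neutral_right) (use nbr_fin in auto, metis that not_le)
    also have "\<dots> = (\<Sum>v\<in>{..<L} \<inter> {v. A u v}. cnj (f u) * g v)" by (simp add: Int_commute)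
    also have "\<dots> = (\<Sum>v<L. if A u v then cnj (f u) * g v else 0)"
      by (subst sum.inter_restrict) auto
    finally show ?thesis .
  qed
  have "(\<Sum>u<L. cnj (f u) * ham E n \<gamma> w g u) =
      (\<Sum>u<L. (\<Sum>v\<in>{v. A u v}. cnj (f u) * g v) + complex_of_real \<gamma> * (if u = w then cnj (f w) * g w else 0))"
    by (intro sum.cong refl) (simp add: ham_eq sum_distrib_left algebra_simps)
  also have "\<dots> = (\<Sum>u<L. \<Sum>v<L. if A u v then cnj (f u) * g v else 0) + complex_of_real \<gamma> * (if w < L then cnj (f w) * g w else 0)"
  proof -
    have g: "(\<Sum>u<L. complex_of_real \<gamma> * (if u = w then cnj (f w) * g w else 0)) = complex_of_real \<gamma> * (if w < L then cnj (f w) * g w else 0)"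
      by (simp add: sum_distrib_left[symmetric])
    show ?thesis by (simp only: sum.distrib i g)
  qed
  finally show ?thesis .
qed

lemma ham_opctx: "opctx (ham E n \<gamma> w) (Suc n) (real n + 2 + \<bar>\<gamma>\<bar>)"
proof
  fix a :: complex and f g :: "nat \<Rightarrow> complex"
  show "ham E n \<gamma> w (\<lambda>u. a * f u + g u) = (\<lambda>u. a * ham E n \<gamma> w f u + ham E n \<gamma> w g u)"
    by (rule ext) (simp add: ham_eq sum.distrib sum_distrib_left algebra_simps)
next
  fix f :: "nat \<Rightarrow> complex" and X u
  assume fb: "\<And>v. norm (f v) \<le> X"
  have X0: "X \<ge> 0" using fb[of 0] norm_ge_zero[of "f 0"] by linarith
  have "norm (ham E n \<gamma> w f u) \<le> norm (\<Sum>v\<in>{v. A u v}. f v) + \<bar>\<gamma>\<bar> * X"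
    unfolding ham_eq using fb X0
    by (intro order.trans[OF norm_triangle_ineq]) (auto simp: norm_mult intro!: mult_left_mono)
  also have "norm (\<Sum>v\<in>{v. A u v}. f v) \<le> (\<Sum>v\<in>{v. A u v}. X)"
    by (rule sum_norm_le) (rule fb)
  also have "(\<Sum>v\<in>{v. A u v}. X) = real (card {v. A u v}) * X" by simp
  also have "\<dots> \<le> (real n + 2) * X"
    using nbr_card[of u] X0 by (intro mult_right_mono) auto
  finally show "norm (ham E n \<gamma> w f u) \<le> (real n + 2 + \<bar>\<gamma>\<bar>) * X"
    by (simp add: algebra_simps)
next
  show "0 \<le> real n + 2 + \<bar>\<gamma>\<bar>" by simp
next
  fix f :: "nat \<Rightarrow> complex" and M u
  assume M: "Suc n \<le> M" and fz: "\<And>u. M \<le> u \<Longrightarrow> f u = 0" and u: "Suc M \<le> u"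
  have "{v. A u v} \<subseteq> {u - 1, Suc u}" using nbr_sub[of u] M u by auto
  then have "(\<Sum>v\<in>{v. A u v}. f v) = 0"
    using M u by (intro sum.neutral) (auto intro!: fz)
  moreover have "u \<noteq> w" using wn M u by auto
  ultimately show "ham E n \<gamma> w f u = 0" by (simp add: ham_eq)
next
  fix f g :: "nat \<Rightarrow> complex" and L
  assume fz: "\<And>u. L \<le> u \<Longrightarrow> f u = 0" and gz: "\<And>u. L \<le> u \<Longrightarrow> g u = 0"
  have "(\<Sum>u<L. \<Sum>v<L. if A u v then cnj (f v) * g u else 0) = (\<Sum>v<L. \<Sum>u<L. if A u v then cnj (f v) * g u else 0)"
    by (rule sum.swap)
  also have "\<dots> = (\<Sum>u<L. \<Sum>v<L. if A u v then cnj (f u) * g v else 0)"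
    by (intro sum.cong refl) (simp add: A_sym)
  finally show "(\<Sum>u<L. cnj (ham E n \<gamma> w f u) * g u) = (\<Sum>u<L. cnj (f u) * ham E n \<gamma> w g u)"
    by (simp add: ham_left[OF fz] ham_right[OF gz])
qed

end


locale rctx = gctx +
  fixes d :: nat
  assumes deg: "\<And>u. u < n \<Longrightarrow> card {v. E u v} = d"
    and dpos: "d > 0"
begin

definition "sn = sqrt (real n)"
definition "Dq = sqrt (real d ^ 2 + 4 * real n)"
definition "bet = (Dq - real d) / (2 * sn)"
definition "lam = (real d + Dq) / 2"
definition "phi u = (if u < n then complex_of_real (1 / sn) else 0) + complex_of_real bet * basis n u"
definition "rho u = complex_of_real bet * basis (Suc n) u + complex_of_real (\<gamma> / sn) * basis w u"

lemma n_pos: "n > 0" using wn by simp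

lemma sn_pos: "sn > 0" using n_pos by (simp add: sn_def)

lemma sn_sq: "sn ^ 2 = real n" by (simp add: sn_def)

lemma Dq_ge: "Dq \<ge> real d"
  unfolding Dq_def by (rule real_le_rsqrt) simp

lemma Dq_sq: "Dq ^ 2 = real d ^ 2 + 4 * real n"
  unfolding Dq_def by simp

lemma bet_nonneg: "bet \<ge> 0"
  using Dq_ge sn_pos by (simp add: bet_def)

lemma bet_lam: "bet * lam = sn"
proof -
  have "bet * lam = (Dq ^ 2 - real d ^ 2) / (4 * sn)"
    using sn_pos by (simp add: bet_def lam_def field_simps power2_eq_square)
  also have "\<dots> = real n / sn" using sn_pos by (simp add: Dq_sq)
  also have "\<dots> = sn" using sn_pos sn_sq by (simp add: field_simps power2_eq_square)
  finally show ?thesis .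
qed

lemma lam_eq: "lam = real d + bet * sn"
  using sn_pos by (simp add: bet_def lam_def field_simps)

lemma bet_le: "bet \<le> sn / real d"
proof -
  have "bet * (Dq + real d) = 2 * sn"
  proof -
    have "bet * (Dq + real d) = 2 * (bet * lam)" by (simp add: lam_def algebra_simps)
    then show ?thesis by (simp add: bet_lam)
  qed
  moreover have "bet * (Dq + real d) \<ge> bet * (2 * real d)"
    using bet_nonneg Dq_ge by (intro mult_left_mono) auto
  ultimately have "bet * (2 * real d) \<le> 2 * sn" by linarith
  then show ?thesis using dpos by (simp add: field_simps)
qed

lemma nbr_lt: "u < n \<Longrightarrow> {v. A u v} = insert n {v. E u v}"
  by (auto simp: cone_path_adj_def dest: Esupp)

lemma nbr_n: "{v. A n v} = insert (Suc n) {..<n}"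
  by (auto simp: cone_path_adj_def)

lemma nbr_Sn: "{v. A (Suc n) v} = {n, Suc (Suc n)}"
  by (auto simp: cone_path_adj_def)

lemma nbr_big: "Suc (Suc n) \<le> u \<Longrightarrow> {v. A u v} = {u - 1, Suc u}"
  by (auto simp: cone_path_adj_def)

lemma ham_phi: "ham E n \<gamma> w phi u = complex_of_real lam * phi u + rho u"
proof -
  consider "u < n" | "u = n" | "u = Suc n" | "Suc (Suc n) \<le> u" by linarith
  then show ?thesis
  proof cases
    case 1
    have fin: "finite {v. E u v}" by (rule finite_subset[of _ "{..<n}"]) (auto dest: Esupp)
    have nn: "n \<notin> {v. E u v}" by (auto dest: Esupp)
    have "(\<Sum>v\<in>{v. A u v}. phi v) = phi n + (\<Sum>v\<in>{v. E u v}. phi v)"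
      unfolding nbr_lt[OF 1] using fin nn by simp
    also have "(\<Sum>v\<in>{v. E u v}. phi v) = (\<Sum>v\<in>{v. E u v}. complex_of_real (1 / sn))"
      by (intro sum.cong refl) (auto simp: phi_def basis_def dest: Esupp)
    also have "\<dots> = of_nat d * complex_of_real (1 / sn)" using deg[OF 1] by simp
    finally have s: "(\<Sum>v\<in>{v. A u v}. phi v) = complex_of_real bet + of_nat d * complex_of_real (1 / sn)"
      by (simp add: phi_def basis_def)
    have e: "complex_of_real bet + of_nat d * complex_of_real (1 / sn) = complex_of_real lam * complex_of_real (1 / sn)"
      using sn_pos by (simp add: lam_eq field_simps)
    show ?thesis unfolding ham_eq s e using 1 wn
      by (simp add: phi_def rho_def basis_def)
  next
    case 2
    have "(\<Sum>v\<in>{v. A u v}. phi v) = phi (Suc n) + (\<Sum>v<n. phi v)"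
      unfolding 2 nbr_n by simp
    also have "(\<Sum>v<n. phi v) = (\<Sum>v<n. complex_of_real (1 / sn))"
      by (intro sum.cong refl) (auto simp: phi_def basis_def)
    also have "\<dots> = complex_of_real (real n / sn)" by simp
    also have "real n / sn = sn" using sn_pos sn_sq by (simp add: field_simps power2_eq_square)
    finally have s: "(\<Sum>v\<in>{v. A u v}. phi v) = complex_of_real sn"
      by (simp add: phi_def basis_def)
    have "complex_of_real lam * phi u = complex_of_real sn"
      using 2 bet_lam by (simp add: phi_def basis_def flip: of_real_mult) (simp add: mult.commute)
    then show ?thesis unfolding ham_eq s using 2 wn
      by (simp add: rho_def basis_def)
  next
    case 3
    have s: "(\<Sum>v\<in>{v. A u v}. phi v) = complex_of_real bet"
      unfolding 3 nbr_Sn by (simp add: phi_def basis_def)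
    then show ?thesis unfolding ham_eq s using 3 wn
      by (simp add: phi_def rho_def basis_def)
  next
    case 4
    have s: "(\<Sum>v\<in>{v. A u v}. phi v) = 0"
      unfolding nbr_big[OF 4] using 4 by (intro sum.neutral) (auto simp: phi_def basis_def)
    then show ?thesis unfolding ham_eq s using 4 wn
      by (simp add: phi_def rho_def basis_def)
  qed
qed

end


sublocale rctx \<subseteq> op: opctx "ham E n \<gamma> w" "Suc n" "real n + 2 + \<bar>\<gamma>\<bar>"
  by (rule ham_opctx)

context rctx begin

abbreviation "Hm \<equiv> ham E n \<gamma> w"
definition "RR = sqrt (bet ^ 2 + (\<gamma> / sn) ^ 2)"

lemma phib: "norm (phi v) \<le> 1 / sn + bet"
  using sn_pos bet_nonneg by (auto simp: phi_def basis_def norm_mult norm_divide)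

lemma rhob: "norm (rho v) \<le> bet + \<bar>\<gamma>\<bar> / sn"
proof -
  have "norm (rho v) \<le> norm (complex_of_real bet * basis (Suc n) v) + norm (complex_of_real (\<gamma> / sn) * basis w v)"
    unfolding rho_def by (rule norm_triangle_ineq)
  also have "\<dots> \<le> bet + \<bar>\<gamma>\<bar> / sn"
    using sn_pos bet_nonneg by (intro add_mono) (auto simp: basis_def norm_mult norm_divide)
  finally show ?thesis .
qed

lemma rho_norm: "(\<Sum>u<Suc (Suc n). (norm (rho u))^2) = bet ^ 2 + (\<gamma> / sn) ^ 2"
proof -
  have "(norm (rho u))^2 = (if u = Suc n then bet ^ 2 else 0) + (if u = w then (\<gamma> / sn) ^ 2 else 0)" for u
    using wn bet_nonneg sn_pos by (auto simp: rho_def basis_def norm_mult power2_abs norm_divide power_divide)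
  then have "(\<Sum>u<Suc (Suc n). (norm (rho u))^2) =
     (\<Sum>u<Suc (Suc n). if u = Suc n then bet ^ 2 else 0) + (\<Sum>u<Suc (Suc n). if u = w then (\<gamma> / sn) ^ 2 else 0)"
    by (simp add: sum.distrib)
  also have "\<dots> = bet ^ 2 + (\<gamma> / sn) ^ 2" using wn by simp
  finally show ?thesis .
qed

lemma evol_rho: "norm (evol Hm t rho w) \<le> RR"
proof -
  have "(\<Sum>u\<in>{w}. (norm (evol Hm t rho u))^2) \<le> (\<Sum>u<Suc (Suc n). (norm (rho u))^2)"
    by (rule op.contraction) (use wn in \<open>auto simp: rho_def basis_def\<close>)
  then have "(norm (evol Hm t rho w))^2 \<le> bet ^ 2 + (\<gamma> / sn) ^ 2" unfolding rho_norm by simp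
  then show ?thesis unfolding RR_def by (rule real_le_rsqrt)
qed

lemma evol_basis_n: "norm (evol Hm t (basis n) w) \<le> 1"
proof -
  have "(\<Sum>u\<in>{w}. (norm (evol Hm t (basis n) u))^2) \<le> (\<Sum>u<Suc n. (norm (basis n u))^2)"
    by (rule op.contraction) (auto simp: basis_def)
  also have "(\<Sum>u<Suc n. (norm (basis n u))^2) = 1"
    by (simp add: basis_def)
  finally have "(norm (evol Hm t (basis n) w))^2 \<le> 1" by simp
  then show ?thesis by (simp add: power_le_one_iff abs_le_square_iff)
qed

lemma Hphi: "Hm phi = (\<lambda>u. complex_of_real lam * phi u + rho u)"
  by (rule ext) (rule ham_phi)

lemma evol_Hphi: "evol Hm s (Hm phi) w = complex_of_real lam * evol Hm s phi w + evol Hm s rho w"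
  unfolding Hphi by (rule op.evol_lin[OF phib rhob])

lemma evol_phi_bound: "norm (evol Hm t phi w) \<le> 1 / sn + \<bar>t\<bar> * RR"
proof -
  define c where "c = \<i> * complex_of_real lam"
  define Fn where "Fn s = exp (c * complex_of_real s) * evol Hm s phi w" for s
  define Dv where "Dv s = - \<i> * exp (c * complex_of_real s) * evol Hm s rho w" for s
  have dF: "(Fn has_vector_derivative Dv s) (at s)" for s
  proof -
    have dE0: "((\<lambda>z. exp (c * z)) has_field_derivative (c * exp (c * complex_of_real s))) (at (complex_of_real s))"
      by (auto intro!: derivative_eq_intros)
    have dE: "((\<lambda>s. exp (c * complex_of_real s)) has_vector_derivative (c * exp (c * complex_of_real s))) (at s)"
      using has_vector_derivative_real_field[OF dE0] by simp
    have dG: "((\<lambda>s. evol Hm s phi w) has_vector_derivative (- \<i> * evol Hm s (Hm phi) w)) (at s)"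
      by (rule op.evol_deriv[OF phib])
    show ?thesis unfolding Fn_def
      by (rule has_vector_derivative_eq_rhs[OF has_vector_derivative_mult[OF dE dG]])
        (simp add: Dv_def evol_Hphi c_def algebra_simps)
  qed
  have nD: "norm (Dv s) \<le> RR" for s
  proof -
    have "exp (c * complex_of_real s) = exp (\<i> * complex_of_real (lam * s))" by (simp add: c_def mult.assoc)
    then have e1: "norm (exp (c * complex_of_real s)) = 1" by simp
    have "norm (Dv s) = norm (exp (c * complex_of_real s)) * norm (evol Hm s rho w)"
      by (simp add: Dv_def norm_mult del: norm_exp_eq_Re)
    then show ?thesis using evol_rho[of s] e1 by (metis mult_1_left)
  qed
  have "norm (Fn t - Fn 0) \<le> RR * norm (t - 0)"
  proof (rule differentiable_bound[where S = UNIV and f' = "\<lambda>s h. h *\<^sub>R Dv s"])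
    fix s :: real
    show "(Fn has_derivative (\<lambda>h. h *\<^sub>R Dv s)) (at s within UNIV)"
      using dF[of s] by (simp add: has_vector_derivative_def)
    have "onorm (\<lambda>h::real. h *\<^sub>R Dv s) = onorm (\<lambda>h::real. h) * norm (Dv s)"
      by (rule onorm_scaleR_left) (rule bounded_linear_ident)
    then show "onorm (\<lambda>h. h *\<^sub>R Dv s) \<le> RR" using nD[of s] by (simp add: onorm_id)
  qed auto
  moreover have "Fn 0 = complex_of_real (1 / sn)"
    using wn by (simp add: Fn_def op.evol_zero phi_def basis_def)
  moreover have "norm (Fn t) = norm (evol Hm t phi w)"
  proof -
    have "exp (c * complex_of_real t) = exp (\<i> * complex_of_real (lam * t))" by (simp add: c_def mult.assoc)
    then show ?thesis by (simp add: Fn_def norm_mult)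
  qed
  moreover have "norm (Fn t) \<le> norm (Fn 0) + norm (Fn t - Fn 0)" by (rule norm_triangle_sub)
  ultimately show ?thesis using sn_pos by (simp add: mult.commute norm_divide)
qed

lemma z1_dec: "z1 n = (\<lambda>u. complex_of_real (- bet) * basis n u + phi u)"
  by (rule ext) (simp add: z1_def phi_def basis_def sn_def)

lemma z1b: "norm (z1 n v) \<le> 1 / sn"
  using sn_pos by (simp add: z1_def sn_def norm_divide)

lemma basisb: "norm (basis k v) \<le> 1"
  by (simp add: basis_def)

lemma evol_z1_bound: "norm (evol Hm t (z1 n) w) \<le> 1 / sn + \<bar>t\<bar> * RR + bet"
proof -
  have "evol Hm t (z1 n) w = complex_of_real (- bet) * evol Hm t (basis n) w + evol Hm t phi w"
    unfolding z1_dec by (rule op.evol_lin[OF basisb phib])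
  then have "norm (evol Hm t (z1 n) w) \<le> norm (complex_of_real (- bet) * evol Hm t (basis n) w) + norm (evol Hm t phi w)"
    by (simp only:) (rule norm_triangle_ineq)
  also have "norm (complex_of_real (- bet) * evol Hm t (basis n) w) = bet * norm (evol Hm t (basis n) w)"
    using bet_nonneg by (simp add: norm_mult)
  also have "bet * norm (evol Hm t (basis n) w) + norm (evol Hm t phi w) \<le> bet * 1 + (1 / sn + \<bar>t\<bar> * RR)"
    using bet_nonneg by (intro add_mono mult_left_mono evol_basis_n evol_phi_bound) auto
  finally show ?thesis by simp
qed

lemma z1_norm: "(\<Sum>u<Suc n. (norm (z1 n u))^2) = 1"
proof -
  have "(\<Sum>u<Suc n. (norm (z1 n u))^2) = (\<Sum>u<n. (1 / sn)^2)"
    using sn_pos by (simp add: z1_def sn_def norm_divide)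
  also have "\<dots> = real n / sn ^ 2" by (simp add: power_divide)
  also have "\<dots> = 1" using sn_sq n_pos by simp
  finally show ?thesis .
qed

lemma D_summable:
  assumes "norm \<zeta> = 1"
  shows "(\<lambda>u. (norm (evol Hm t (z1 n) u - \<zeta> * basis w u))^2) summable_on UNIV"
proof (rule nonneg_bdd_above_summable_on)
  show "bdd_above (sum (\<lambda>u. (norm (evol Hm t (z1 n) u - \<zeta> * basis w u))^2) ` {F. F \<subseteq> UNIV \<and> finite F})"
  proof (rule bdd_aboveI2)
    fix F :: "nat set" assume "F \<in> {F. F \<subseteq> UNIV \<and> finite F}"
    then have F: "finite F" by simp
    have "(\<Sum>u\<in>F. (norm (evol Hm t (z1 n) u - \<zeta> * basis w u))^2)
        \<le> (\<Sum>u\<in>F. 2 * (norm (evol Hm t (z1 n) u))^2 + 2 * (norm (basis w u))^2)"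
    proof (rule sum_mono)
      fix u
      have "norm (evol Hm t (z1 n) u - \<zeta> * basis w u) \<le> norm (evol Hm t (z1 n) u) + norm (basis w u)"
        using norm_triangle_ineq4[of "evol Hm t (z1 n) u" "\<zeta> * basis w u"] assms by (simp add: norm_mult)
      then have "(norm (evol Hm t (z1 n) u - \<zeta> * basis w u))^2 \<le> (norm (evol Hm t (z1 n) u) + norm (basis w u))^2"
        by (intro power_mono) auto
      also have "\<dots> \<le> 2 * (norm (evol Hm t (z1 n) u))^2 + 2 * (norm (basis w u))^2"
        using zero_le_power2[of "norm (evol Hm t (z1 n) u) - norm (basis w u)"]
        unfolding power2_diff power2_sum by linarith
      finally show "(norm (evol Hm t (z1 n) u - \<zeta> * basis w u))^2 \<le> 2 * (norm (evol Hm t (z1 n) u))^2 + 2 * (norm (basis w u))^2" .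
    qed
    also have "\<dots> = 2 * (\<Sum>u\<in>F. (norm (evol Hm t (z1 n) u))^2) + 2 * (\<Sum>u\<in>F. (norm (basis w u))^2)"
      by (simp add: sum.distrib sum_distrib_left)
    also have "\<dots> \<le> 2 * 1 + 2 * 1"
    proof (intro add_mono mult_left_mono)
      show "(\<Sum>u\<in>F. (norm (evol Hm t (z1 n) u))^2) \<le> 1"
        using op.contraction[of "Suc n" "z1 n" F t] F z1_norm by (simp add: z1_def)
      show "(\<Sum>u\<in>F. (norm (basis w u))^2) \<le> 1"
      proof -
        have "(norm (basis w u))^2 = (if u = w then 1 else 0)" for u by (auto simp: basis_def)
        then show ?thesis using F by (simp add: sum.delta)
      qed
    qed auto
    finally show "(\<Sum>u\<in>F. (norm (evol Hm t (z1 n) u - \<zeta> * basis w u))^2) \<le> 4" by simp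
  qed
qed auto

lemma l2_lower:
  assumes "norm \<zeta> = 1"
  shows "l2norm_sq (\<lambda>u. evol Hm t (z1 n) u - \<zeta> * basis w u) \<ge> (norm (evol Hm t (z1 n) w - \<zeta>))^2"
proof -
  let ?g = "\<lambda>u. (norm (evol Hm t (z1 n) u - \<zeta> * basis w u))^2"
  have "infsum ?g {w} \<le> infsum ?g UNIV"
    by (rule infsum_mono_neutral) (auto simp: D_summable[OF assms])
  then show ?thesis by (simp add: l2norm_sq_def basis_def)
qed

end


context rctx begin

lemma sym_pow:
  assumes g0: "\<gamma> = 0" and fs: "\<And>u v. u < n \<Longrightarrow> v < n \<Longrightarrow> f u = f v"
  shows "\<forall>u v. u < n \<longrightarrow> v < n \<longrightarrow> (Hm ^^ k) f u = (Hm ^^ k) f v"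
proof (induction k)
  case 0 show ?case
  proof (intro allI impI)
    fix u v assume "u < n" "v < n"
    then have "f u = f v" by (rule fs)
    then show "(Hm ^^ 0) f u = (Hm ^^ 0) f v" by simp
  qed
next
  case (Suc k)
  define g where "g = (Hm ^^ k) f"
  have gs: "g x = g 0" if "x < n" for x using Suc.IH that n_pos unfolding g_def by blast
  have val: "Hm g x = g n + of_nat d * g 0" if "x < n" for x
  proof -
    have fin: "finite {v. E x v}" by (rule finite_subset[of _ "{..<n}"]) (auto dest: Esupp)
    have nn: "n \<notin> {v. E x v}" by (auto dest: Esupp)
    have "(\<Sum>v\<in>{v. A x v}. g v) = g n + (\<Sum>v\<in>{v. E x v}. g v)"
      unfolding nbr_lt[OF that] using fin nn by simp
    also have "(\<Sum>v\<in>{v. E x v}. g v) = (\<Sum>v\<in>{v. E x v}. g 0)"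
      by (intro sum.cong refl) (auto intro!: gs dest: Esupp)
    also have "\<dots> = of_nat d * g 0" using deg[OF that] by simp
    finally show ?thesis by (simp add: ham_eq g0)
  qed
  show ?case
  proof (intro allI impI)
    fix u v assume "u < n" "v < n"
    then have "Hm g u = Hm g v" using val by simp
    then show "(Hm ^^ Suc k) f u = (Hm ^^ Suc k) f v" by (simp add: g_def)
  qed
qed

lemma evol_sym:
  assumes g0: "\<gamma> = 0" and u: "u < n"
  shows "evol Hm t (z1 n) u = evol Hm t (z1 n) w"
proof -
  have zs: "\<forall>u v. u < n \<longrightarrow> v < n \<longrightarrow> (Hm ^^ k) (z1 n) u = (Hm ^^ k) (z1 n) v" for k
    by (rule sym_pow[OF g0]) (simp add: z1_def)
  have eq: "(Hm ^^ k) (z1 n) u = (Hm ^^ k) (z1 n) w" for k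
    using zs u wn by blast
  show ?thesis unfolding evol_def by (simp only: eq)
qed

lemma gamma0_bound:
  assumes "\<gamma> = 0"
  shows "norm (evol Hm t (z1 n) w) \<le> 1 / sn"
proof -
  have zs: "\<And>u. Suc n \<le> u \<Longrightarrow> z1 n u = 0" by (simp add: z1_def)
  have "(\<Sum>u\<in>{..<n}. (norm (evol Hm t (z1 n) u))^2) \<le> (\<Sum>u<Suc n. (norm (z1 n u))^2)"
    using op.contraction[of "Suc n" "z1 n" "{..<n}" t] zs by simp
  also have "(\<Sum>u<Suc n. (norm (z1 n u))^2) = 1" by (rule z1_norm)
  finally have le1: "(\<Sum>u\<in>{..<n}. (norm (evol Hm t (z1 n) u))^2) \<le> 1" .
  have "(\<Sum>u\<in>{..<n}. (norm (evol Hm t (z1 n) u))^2) = real n * (norm (evol Hm t (z1 n) w))^2"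
  proof -
    have "(\<Sum>u\<in>{..<n}. (norm (evol Hm t (z1 n) u))^2) = (\<Sum>u\<in>{..<n}. (norm (evol Hm t (z1 n) w))^2)"
    proof (rule sum.cong[OF refl])
      fix u assume "u \<in> {..<n}"
      then have "u < n" by simp
      show "(norm (evol Hm t (z1 n) u))^2 = (norm (evol Hm t (z1 n) w))^2"
        by (simp only: evol_sym[OF assms \<open>u < n\<close>])
    qed
    then show ?thesis by simp
  qed
  then have "real n * (norm (evol Hm t (z1 n) w))^2 \<le> 1" using le1 by simp
  then have "(norm (evol Hm t (z1 n) w))^2 \<le> 1 / real n"
    using n_pos by (simp add: field_simps)
  then have "(norm (evol Hm t (z1 n) w))^2 \<le> (1 / sn)^2"
    using sn_sq by (simp add: power_divide)
  then show ?thesis by (rule power2_le_imp_le) (use sn_pos in simp)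
qed

end

theorem theorem3:
  fixes E :: "nat \<Rightarrow> nat \<Rightarrow> nat \<Rightarrow> bool" and d :: "nat \<Rightarrow> nat"
    and t0 \<gamma> :: "nat \<Rightarrow> real" and \<zeta> :: "nat \<Rightarrow> complex" and w :: "nat \<Rightarrow> nat"
  assumes "\<forall>n\<ge>1. regular_graph n (d n) (E n)"
    and "(\<lambda>n. sqrt (real n)) \<in> o(\<lambda>n. real (d n))"
    and "\<forall>n\<ge>1. w n < n"
    and "\<forall>n. norm (\<zeta> n) = 1"
    and "(\<lambda>n. l2norm_sq (\<lambda>u. evol (ham (E n) n (\<gamma> n) (w n)) (t0 n) (z1 n) u
                                - \<zeta> n * basis (w n) u)) \<in> o(\<lambda>n. 1)"
    and "(\<lambda>n. 1 / (\<gamma> n * eps1 n (w n))) \<in> o(\<lambda>n. 1)"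
  shows "(\<lambda>n. \<gamma> n * t0 n) \<in> \<Omega>(\<lambda>n. 1 / eps1 n (w n))"
proof -
  have ev1: "eventually (\<lambda>n. norm (1 / (\<gamma> n * eps1 n (w n))) \<le> 1 * norm (1::real)) at_top"
    by (rule landau_o.smallD[OF assms(6)]) simp
  have ev2: "eventually (\<lambda>n. norm (sqrt (real n)) \<le> (1/4) * norm (real (d n))) at_top"
    by (rule landau_o.smallD[OF assms(2)]) simp
  have ev3: "eventually (\<lambda>n. norm (l2norm_sq (\<lambda>u. evol (ham (E n) n (\<gamma> n) (w n)) (t0 n) (z1 n) u
                                - \<zeta> n * basis (w n) u)) \<le> (1/16) * norm (1::real)) at_top"
    by (rule landau_o.smallD[OF assms(5)]) simp
  have ev4: "eventually (\<lambda>n::nat. n \<ge> 16) at_top" by (rule eventually_ge_at_top)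
  show ?thesis
  proof (rule landau_omega.bigI[of "1/8"])
    show "eventually (\<lambda>n. norm (\<gamma> n * t0 n) \<ge> 1/8 * norm (1 / eps1 n (w n))) at_top"
      using ev1 ev2 ev3 ev4
    proof eventually_elim
      case (elim n)
      have n1: "n \<ge> 1" using elim(4) by simp
      have rg: "regular_graph n (d n) (E n)" using assms(1) n1 by simp
      have wn: "w n < n" using assms(3) n1 by simp
      define s where "s = sqrt (real n)"
      have s4: "s \<ge> 4"
      proof -
        have "sqrt 16 \<le> sqrt (real n)" using elim(4) by (subst real_sqrt_le_iff) simp
        then show ?thesis by (simp add: s_def)
      qed
      have ds: "s \<le> real (d n) / 4" using elim(2) by (simp add: s_def)
      have dpos: "d n > 0" using ds s4 by (cases "d n") auto
      have R: "rctx (E n) n (w n) (d n)"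
        unfolding rctx_def gctx_def rctx_axioms_def
        using rg wn dpos by (auto simp: regular_graph_def)
      interpret R: rctx "E n" n "\<gamma> n" "w n" "d n" by (rule R)
      have sn: "R.sn = s" by (simp add: R.sn_def s_def)
      have eps: "eps1 n (w n) = 1 / s"
        using wn by (simp add: eps1_def l2_inner_basis z1_def s_def norm_divide)
      define a where "a = evol (ham (E n) n (\<gamma> n) (w n)) (t0 n) (z1 n) (w n)"
      have low: "l2norm_sq (\<lambda>u. evol (ham (E n) n (\<gamma> n) (w n)) (t0 n) (z1 n) u - \<zeta> n * basis (w n) u)
          \<ge> (norm (a - \<zeta> n))^2"
        unfolding a_def by (rule R.l2_lower) (use assms(4) in simp)
      have l16: "l2norm_sq (\<lambda>u. evol (ham (E n) n (\<gamma> n) (w n)) (t0 n) (z1 n) u - \<zeta> n * basis (w n) u) \<le> 1/16"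
        using elim(3) by simp
      have "(norm (a - \<zeta> n))^2 \<le> 1/16" using low l16 by linarith
      then have "(norm (a - \<zeta> n))^2 \<le> (1/4)^2" by (simp add: power_divide)
      then have "norm (a - \<zeta> n) \<le> 1/4" by (rule power2_le_imp_le) simp
      moreover have "norm (\<zeta> n) - norm (a - \<zeta> n) \<le> norm a"
        using norm_triangle_ineq2[of "\<zeta> n" a] by (simp add: norm_minus_commute)
      ultimately have a34: "norm a \<ge> 3/4" using assms(4) by simp
      have g0: "\<gamma> n \<noteq> 0"
      proof
        assume "\<gamma> n = 0"
        then have "norm a \<le> 1 / s" unfolding a_def using R.gamma0_bound by (simp add: sn)
        also have "1 / s \<le> 1/4" using s4 by simp
        finally show False using a34 by simp
      qed
      have gs: "s \<le> \<bar>\<gamma> n\<bar>"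
      proof -
        have "\<bar>1 / (\<gamma> n * (1 / s))\<bar> \<le> 1" using elim(1) by (simp add: eps)
        then have "s / \<bar>\<gamma> n\<bar> \<le> 1" using s4 g0 by (simp add: abs_div)
        then show ?thesis using g0 by (simp add: field_simps)
      qed
      have bet: "R.bet \<le> 1/4"
      proof -
        have "R.bet \<le> s / real (d n)" using R.bet_le by (simp add: sn)
        also have "\<dots> \<le> 1/4" using ds dpos by (simp add: field_simps)
        finally show ?thesis .
      qed
      have "3/4 \<le> 1 / s + \<bar>t0 n\<bar> * R.RR + R.bet"
        using a34 R.evol_z1_bound[of "t0 n"] unfolding a_def sn by simp
      moreover have "1 / s \<le> 1/4" using s4 by simp
      ultimately have tR: "\<bar>t0 n\<bar> * R.RR \<ge> 1/4" using bet by linarith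
      have RR: "R.RR \<le> 2 * \<bar>\<gamma> n\<bar> / s"
      proof -
        have q1: "1 \<le> (\<gamma> n / s)^2"
        proof -
          have "1 \<le> \<bar>\<gamma> n\<bar> / s" using gs s4 by simp
          then have "1 \<le> (\<bar>\<gamma> n\<bar> / s)^2" by (simp add: one_le_power)
          then show ?thesis by (simp add: power_divide)
        qed
        have "R.bet ^ 2 \<le> 1" using bet R.bet_nonneg by (simp add: power_le_one)
        then have "R.bet ^ 2 + (\<gamma> n / s)^2 \<le> (2 * \<bar>\<gamma> n\<bar> / s)^2"
          using q1 by (simp add: power_divide power_mult_distrib)
        then show ?thesis unfolding R.RR_def sn using s4 by (intro real_le_lsqrt) auto
      qed
      have "1/4 \<le> \<bar>t0 n\<bar> * (2 * \<bar>\<gamma> n\<bar> / s)"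
        using tR RR by (meson abs_ge_zero mult_left_mono order_trans)
      then have "s / 8 \<le> \<bar>\<gamma> n * t0 n\<bar>" using s4 by (simp add: field_simps abs_mult)
      then show ?case using s4 by (simp add: eps)
    qed
  qed simp
qed


end
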